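(* Let $\alpha\neq\beta$ and let $(g_n)$ be as in the context. For $n\ge1$ write $$g_n(x)=\sum_{k=0}^{n-1}A_k^{(n)}(\alpha-\beta)^{-k}(x-\beta)^k .$$ Then $A_0^{(n)}=\beta^n$ and, for $1\le k<n$, $$A_k^{(n)}=(n-k)\sum_{j=1}^{k}\frac1j\binom{n-1}{j-1}\binom{k-1}{j-1}\alpha^j\beta^{n-j}.$$
   Context: Fix complex numbers $\alpha\neq\beta$. Define polynomials $g_n(x)\in\mathbb{C}[x]$ recursively by $g_0(x)=1$ and, for $n\ge1$, $$(x-\alpha)(\alpha-\beta)^{n-1}g_n(x)=\alpha(x-\beta)^n g_{n-1}(\alpha)-x(\alpha-\beta)^n g_{n-1}(x).$$ (The right-hand side vanishes at $x=\alpha$, so it is divisible by $x-\alpha$ and $g_n$ is a uniquely determined polynomial; for $n\ge1$ it has degree at most $n-1$ in $x$.) *)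

theory Defs
  imports "HOL-Computational_Algebra.Polynomial"
begin

primrec gpoly :: "complex \<Rightarrow> complex \<Rightarrow> nat \<Rightarrow> complex poly" where
  "gpoly a b 0 = 1"
| "gpoly a b (Suc n) =
     (THE p. [:-a, 1:] * smult ((a - b) ^ n) p =
        smult (a * poly (gpoly a b n) a) ([:-b, 1:] ^ Suc n)
        - smult ((a - b) ^ Suc n) ([:0, 1:] * gpoly a b n))"

end

theory Submission
  imports Defs
begin

definition w :: "nat \<Rightarrow> nat \<Rightarrow> nat \<Rightarrow> complex" where
  "w N K j = (1 / of_nat j) * of_nat ((N - 1) choose (j - 1)) * of_nat ((K - 1) choose (j - 1))"

lemma binrel: "n \<ge> 1 \<Longrightarrow> m \<ge> 1 \<Longrightarrow>
  (of_nat m :: complex) * of_nat ((n-1) choose m) = (of_nat n - of_nat m) * of_nat ((n-1) choose (m-1))"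
proof -
  assume n: "n \<ge> 1" and m: "m \<ge> 1"
  show ?thesis
  proof (cases "m \<le> n")
    case True
    have a: "m * ((n-1) choose m) = (n-1) * ((n-1-1) choose (m-1))"
      using times_binomial_minus1_eq[of m "n-1"] m by simp
    have b: "((n-1) - (m-1)) * ((n-1) choose (m-1)) = (n-1) * ((n-1-1) choose (m-1))"
      by (rule binomial_absorb_comp)
    have c: "(n-1) - (m-1) = n - m" using n m by simp
    have "m * ((n-1) choose m) = (n - m) * ((n-1) choose (m-1))" using a b c by simp
    then have "(of_nat (m * ((n-1) choose m)) :: complex) = of_nat ((n - m) * ((n-1) choose (m-1)))" by simp
    then show ?thesis using True by (simp add: of_nat_diff)
  next
    case False
    then show ?thesis using n by (simp add: binomial_eq_0)
  qed
qed

lemma L: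
  assumes k: "k \<ge> 1" and kn: "k + 1 \<le> n"
  shows "of_nat (n - k) * w (n+1) (k+1) (Suc m) - of_nat (n - (k+1)) * w n (k+1) (Suc m)
     - of_nat (n + 1 - k) * w (n+1) k (Suc m) + of_nat (n - k) * w n k (Suc m) = of_nat (n - k) * w n k m"
proof (cases "m = 0")
  case True
  then show ?thesis using k kn by (simp add: w_def of_nat_diff)
next
  case False
  define N0 where "N0 = (of_nat ((n-1) choose m) :: complex)"
  define N1 where "N1 = (of_nat ((n-1) choose (m-1)) :: complex)"
  define K0 where "K0 = (of_nat ((k-1) choose m) :: complex)"
  define K1 where "K1 = (of_nat ((k-1) choose (m-1)) :: complex)"
  have hN: "of_nat m * N0 = (of_nat n - of_nat m) * N1" unfolding N0_def N1_def using binrel[of n m] kn False by simp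
  have hK: "of_nat m * K0 = (of_nat k - of_nat m) * K1" unfolding K0_def K1_def using binrel[of k m] k False by simp
  have pN: "(of_nat (n choose m) :: complex) = N0 + N1" unfolding N0_def N1_def
    using binomial_Suc_Suc[of "n-1" "m-1"] kn False by simp
  have pK: "(of_nat (k choose m) :: complex) = K0 + K1" unfolding K0_def K1_def
    using binomial_Suc_Suc[of "k-1" "m-1"] k False by simp
  have w1: "w (n+1) (k+1) (Suc m) = (N0+N1)*(K0+K1)/(of_nat m + 1)"
    unfolding w_def pN[symmetric] pK[symmetric] by simp
  have w2: "w n (k+1) (Suc m) = N0*(K0+K1)/(of_nat m + 1)"
    unfolding w_def pK[symmetric] N0_def by simp
  have w3: "w (n+1) k (Suc m) = (N0+N1)*K0/(of_nat m + 1)"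
    unfolding w_def pN[symmetric] K0_def by simp
  have w4: "w n k (Suc m) = N0*K0/(of_nat m + 1)"
    unfolding w_def N0_def K0_def by simp
  have e: "of_nat (n - k) * w (n+1) (k+1) (Suc m) - of_nat (n - (k+1)) * w n (k+1) (Suc m)
     - of_nat (n + 1 - k) * w (n+1) k (Suc m) + of_nat (n - k) * w n k (Suc m)
     = ((of_nat n - of_nat k) * (N0+N1)*(K0+K1) - (of_nat n - of_nat k - 1) * N0 * (K0+K1)
        - (of_nat n - of_nat k + 1) * (N0+N1) * K0 + (of_nat n - of_nat k) * N0 * K0) / (of_nat m + 1)"
    unfolding w1 w2 w3 w4 using k kn
    by (simp add: of_nat_diff diff_divide_distrib add_divide_distrib algebra_simps)
  have e2: "of_nat (n - k) * w n k m = (of_nat n - of_nat k) * N1 * K1 / of_nat m"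
    using k kn False unfolding w_def N1_def K1_def by (simp add: of_nat_diff)
  have mz: "(of_nat m :: complex) \<noteq> 0" using False by simp
  have mz2: "(of_nat m + 1 :: complex) \<noteq> 0" by (metis of_nat_Suc of_nat_eq_0_iff nat.distinct(1) add.commute)
  show ?thesis unfolding e e2 using mz mz2 hN hK
    apply (simp add: field_simps)
    by algebra
qed

definition Acoef :: "complex \<Rightarrow> complex \<Rightarrow> nat \<Rightarrow> nat \<Rightarrow> complex" where
  "Acoef a b n k = (if k = 0 then b ^ n
         else of_nat (n - k) *
              (\<Sum>j = 1..k. (1 / of_nat j) * of_nat ((n - 1) choose (j - 1))
                  * of_nat ((k - 1) choose (j - 1)) * a ^ j * b ^ (n - j)))"

lemma Acoef_w: "k \<ge> 1 \<Longrightarrow> Acoef a b n k = of_nat (n - k) * (\<Sum>j = 1..k. w n k j * a ^ j * b ^ (n - j))"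
  unfolding Acoef_def w_def by simp

lemma D:
  assumes k: "k \<ge> 1" and kn: "k + 1 \<le> n"
  shows "Acoef a b (n+1) (k+1) - b * Acoef a b n (k+1) - Acoef a b (n+1) k + b * Acoef a b n k
         = a * Acoef a b n k"
proof -
  define T where "T j = a ^ j * b ^ (n + 1 - j)" for j
  have S1: "Acoef a b (n+1) (k+1) = (\<Sum>j = 1..k+1. (of_nat (n - k) * w (n+1) (k+1) j) * T j)"
    unfolding Acoef_w[of "k+1", OF le_add2] T_def sum_distrib_left by (simp add: mult.assoc del: sum.cl_ivl_Suc)
  have S2: "b * Acoef a b n (k+1) = (\<Sum>j = 1..k+1. (of_nat (n - (k+1)) * w n (k+1) j) * T j)"
    unfolding Acoef_w[of "k+1", OF le_add2] sum_distrib_left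
  proof (rule sum.cong)
    fix j assume "j \<in> {1..k+1}"
    then have "j \<le> n" using kn by simp
    then have "b * b ^ (n - j) = b ^ (n + 1 - j)" by (simp add: Suc_diff_le)
    then show "b * (of_nat (n - (k + 1)) * (w n (k + 1) j * a ^ j * b ^ (n - j))) =
      of_nat (n - (k + 1)) * w n (k + 1) j * T j" unfolding T_def by (metis mult.assoc mult.left_commute)
  qed simp
  have wz: "w N k (k+1) = 0" for N unfolding w_def using k by simp
  have S3: "Acoef a b (n+1) k = (\<Sum>j = 1..k+1. (of_nat (n + 1 - k) * w (n+1) k j) * T j)"
    unfolding Acoef_w[OF k] T_def using wz by (simp add: sum_distrib_left mult.assoc)
  have S4: "b * Acoef a b n k = (\<Sum>j = 1..k+1. (of_nat (n - k) * w n k j) * T j)"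
  proof -
    have "b * Acoef a b n k = (\<Sum>j = 1..k. (of_nat (n - k) * w n k j) * T j)"
      unfolding Acoef_w[OF k] sum_distrib_left
    proof (rule sum.cong)
      fix j assume "j \<in> {1..k}"
      then have "j \<le> n" using kn by simp
      then have "b * b ^ (n - j) = b ^ (n + 1 - j)" by (simp add: Suc_diff_le)
      then show "b * (of_nat (n - k) * (w n k j * a ^ j * b ^ (n - j))) =
        of_nat (n - k) * w n k j * T j" unfolding T_def by (metis mult.assoc mult.left_commute)
    qed simp
    then show ?thesis using wz by simp
  qed
  have S5: "a * Acoef a b n k = (\<Sum>j = 1..k+1. (of_nat (n - k) * w n k (j - 1)) * T j)"
  proof -
    have "(\<Sum>j = 1..k+1. (of_nat (n - k) * w n k (j - 1)) * T j)
        = (\<Sum>j = 0..k. (of_nat (n - k) * w n k j) * T (Suc j))"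
      using sum.shift_bounds_cl_Suc_ivl[of "\<lambda>j. (of_nat (n - k) * w n k (j - 1)) * T j" 0 k] by simp
    also have "\<dots> = (\<Sum>j = 1..k. (of_nat (n - k) * w n k j) * T (Suc j))"
      by (simp add: sum.atLeast_Suc_atMost w_def)
    also have "\<dots> = a * Acoef a b n k"
      unfolding Acoef_w[OF k] sum_distrib_left
    proof (rule sum.cong)
      fix j assume "j \<in> {1..k}"
      then have "j \<le> n" using kn by simp
      then have "n + 1 - Suc j = n - j" by simp
      then show "of_nat (n - k) * w n k j * T (Suc j) = a * (of_nat (n - k) * (w n k j * a ^ j * b ^ (n - j)))"
        unfolding T_def by simp
    qed simp
    finally show ?thesis by simp
  qed
  have "Acoef a b (n+1) (k+1) - b * Acoef a b n (k+1) - Acoef a b (n+1) k + b * Acoef a b n k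
     = (\<Sum>j = 1..k+1. (of_nat (n - k) * w (n+1) (k+1) j - of_nat (n - (k+1)) * w n (k+1) j
         - of_nat (n + 1 - k) * w (n+1) k j + of_nat (n - k) * w n k j) * T j)"
    unfolding S1 S2 S3 S4 by (simp add: algebra_simps sum.distrib sum_subtractf)
  also have "\<dots> = (\<Sum>j = 1..k+1. (of_nat (n - k) * w n k (j - 1)) * T j)"
  proof (rule sum.cong)
    fix j assume "j \<in> {1..k+1}"
    then obtain m where "j = Suc m" by (cases j) auto
    then show "(of_nat (n - k) * w (n+1) (k+1) j - of_nat (n - (k+1)) * w n (k+1) j
         - of_nat (n + 1 - k) * w (n+1) k j + of_nat (n - k) * w n k j) * T j
        = (of_nat (n - k) * w n k (j - 1)) * T j" using L[OF k kn, of m] by simp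
  qed simp
  finally show ?thesis using S5 by simp
qed


lemma R:
  assumes n: "n \<ge> 1"
  shows "k \<le> n \<Longrightarrow> Acoef a b (n+1) k = b * Acoef a b n k + a * (\<Sum>i<k. Acoef a b n i)"
proof (induction k)
  case 0
  then show ?case by (simp add: Acoef_def)
next
  case (Suc k)
  then have IH: "Acoef a b (n+1) k = b * Acoef a b n k + a * (\<Sum>i<k. Acoef a b n i)" by simp
  show ?case
  proof (cases "k = 0")
    case True
    obtain n' where n': "n = Suc n'" using n by (cases n) auto
    show ?thesis using True unfolding n' by (simp add: Acoef_def algebra_simps)
  next
    case False
    have "Acoef a b (n+1) (k+1) = b * Acoef a b n (k+1) + (Acoef a b (n+1) k - b * Acoef a b n k) + a * Acoef a b n k"
      using D[of k n a b] False Suc.prems by (simp add: algebra_simps)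
    then show ?thesis using IH by (simp add: algebra_simps)
  qed
qed

definition Gp :: "complex \<Rightarrow> complex \<Rightarrow> nat \<Rightarrow> complex poly" where
  "Gp a b n = (\<Sum>k<n. monom (Acoef a b n k) k)"

lemma Acoef_big: "n \<ge> 1 \<Longrightarrow> i \<ge> n \<Longrightarrow> Acoef a b n i = 0"
  unfolding Acoef_def by simp

lemma coeff_Gp: "n \<ge> 1 \<Longrightarrow> coeff (Gp a b n) i = Acoef a b n i"
  unfolding Gp_def coeff_sum coeff_monom using Acoef_big[of n i a b] by (auto simp: sum.delta)

lemma PI:
  assumes n: "n \<ge> 1"
  shows "[:-1, 1:] * Gp a b (n+1) = monom (a * (\<Sum>k<n. Acoef a b n k)) (n+1) - [:b, a - b:] * Gp a b n"
proof (rule poly_eqI)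
  fix i
  have n1: "n + 1 \<ge> 1" by simp
  show "coeff ([:-1, 1:] * Gp a b (n+1)) i = coeff (monom (a * (\<Sum>k<n. Acoef a b n k)) (n+1) - [:b, a - b:] * Gp a b n) i"
  proof (cases i)
    case 0
    then show ?thesis using R[OF n, of 0 a b] coeff_Gp[OF n] coeff_Gp[OF n1] by simp
  next
    case (Suc j)
    have c: "coeff ([:-1, 1:] * Gp a b (n+1)) (Suc j) = Acoef a b (n+1) j - Acoef a b (n+1) (Suc j)"
      using coeff_Gp[OF n1] by simp
    have d: "coeff (monom (a * (\<Sum>k<n. Acoef a b n k)) (n+1) - [:b, a - b:] * Gp a b n) (Suc j)
       = (if j = n then a * (\<Sum>k<n. Acoef a b n k) else 0) - (b * Acoef a b n (Suc j) + (a - b) * Acoef a b n j)"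
      using coeff_Gp[OF n] by (simp add: coeff_monom)
    show ?thesis unfolding Suc c d
    proof (cases "j < n")
      case True
      then show "Acoef a b (n+1) j - Acoef a b (n+1) (Suc j) = (if j = n then a * (\<Sum>k<n. Acoef a b n k) else 0) - (b * Acoef a b n (Suc j) + (a - b) * Acoef a b n j)"
        using R[OF n, of j a b] R[OF n, of "Suc j" a b] by (simp add: algebra_simps)
    next
      case False
      show "Acoef a b (n+1) j - Acoef a b (n+1) (Suc j) = (if j = n then a * (\<Sum>k<n. Acoef a b n k) else 0) - (b * Acoef a b n (Suc j) + (a - b) * Acoef a b n j)"
      proof (cases "j = n")
        case True
        then show ?thesis using R[OF n, of n a b] Acoef_big[OF n, of n a b] Acoef_big[OF n, of "Suc n" a b]
          Acoef_big[OF n1, of "Suc n" a b] by simp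
      next
        case False
        then have "j > n" using \<open>\<not> j < n\<close> by simp
        then show ?thesis using False Acoef_big[OF n, of j a b] Acoef_big[OF n, of "Suc j" a b]
          Acoef_big[OF n1, of "j" a b] Acoef_big[OF n1, of "Suc j" a b] by simp
      qed
    qed
  qed
qed


lemma pcompose_power_left: "pcompose ((p :: 'a :: comm_ring_1 poly) ^ m) q = (pcompose p q) ^ m"
  by (induction m) (simp_all add: pcompose_1 pcompose_mult)

definition Fp :: "complex \<Rightarrow> complex \<Rightarrow> nat \<Rightarrow> complex poly" where
  "Fp a b n = (\<Sum>k<n. smult (Acoef a b n k / (a - b) ^ k) ([:-b, 1:] ^ k))"

lemma comp_Fp:
  assumes ab: "a \<noteq> b"
  shows "pcompose (Fp a b n) [:b, a - b:] = Gp a b n"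
proof -
  have l: "pcompose [:-b, 1:] [:b, a - b:] = monom (a - b) 1"
    by (simp add: pcompose_pCons monom_altdef)
  have "pcompose (smult (Acoef a b n k / (a - b) ^ k) ([:-b, 1:] ^ k)) [:b, a - b:] = monom (Acoef a b n k) k" for k
    using ab by (simp add: pcompose_smult pcompose_power_left l monom_power smult_monom)
  then show ?thesis unfolding Fp_def Gp_def pcompose_sum by simp
qed

lemma comp_inj:
  fixes a b :: complex
  assumes ab: "a \<noteq> b" and eq: "pcompose X [:b, a - b:] = pcompose Y [:b, a - b:]"
  shows "X = Y"
proof -
  have "pcompose [:b, a - b:] [:- b / (a - b), 1 / (a - b):] = [:0, 1:]"
    using ab by (simp add: pcompose_pCons field_simps)
  then have "pcompose (pcompose X [:b, a - b:]) [:- b / (a - b), 1 / (a - b):] = X"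
    "pcompose (pcompose Y [:b, a - b:]) [:- b / (a - b), 1 / (a - b):] = Y"
    by (simp_all add: pcompose_assoc[symmetric])
  then show ?thesis using eq by simp
qed

lemma main:
  assumes ab: "a \<noteq> b"
  shows "n \<ge> 1 \<Longrightarrow> gpoly a b n = Fp a b n"
proof (induction n rule: nat_induct_at_least)
  case base
  have F1: "Fp a b 1 = [:b:]" unfolding Fp_def Acoef_def by simp
  have E: "[:-a, 1:] * smult ((a - b) ^ 0) [:b:] =
        smult (a * poly (gpoly a b 0) a) ([:-b, 1:] ^ Suc 0)
        - smult ((a - b) ^ Suc 0) ([:0, 1:] * gpoly a b 0)"
    by (simp add: algebra_simps)
  have "gpoly a b (Suc 0) = [:b:]"
    unfolding gpoly.simps(2)
  proof (rule the_equality)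
    fix p assume "[:-a, 1:] * smult ((a - b) ^ 0) p =
        smult (a * poly (gpoly a b 0) a) ([:-b, 1:] ^ Suc 0)
        - smult ((a - b) ^ Suc 0) ([:0, 1:] * gpoly a b 0)"
    then have "[:-a, 1:] * p = [:-a, 1:] * [:b:]" using E by simp
    moreover have "[:-a, 1:] \<noteq> (0 :: complex poly)" by simp
    ultimately show "p = [:b:]" by (metis mult_left_cancel)
  qed (rule E)
  then show ?case using F1 by simp
next
  case (Suc n)
  define q where "q = [:b, a - b:]"
  have n: "n \<ge> 1" by fact
  have dnz: "(a - b) ^ n \<noteq> 0" using ab by simp
  let ?c = "poly (gpoly a b n) a"
  have cval: "?c = (\<Sum>k<n. Acoef a b n k)"
  proof -
    have "?c = poly (pcompose (Fp a b n) q) 1" unfolding Suc.IH poly_pcompose q_def by simp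
    also have "\<dots> = poly (Gp a b n) 1" unfolding q_def comp_Fp[OF ab] ..
    finally show ?thesis unfolding Gp_def poly_sum poly_monom by simp
  qed
  have E: "[:-a, 1:] * smult ((a - b) ^ n) (Fp a b (Suc n)) =
        smult (a * ?c) ([:-b, 1:] ^ Suc n) - smult ((a - b) ^ Suc n) ([:0, 1:] * gpoly a b n)"
  proof (rule comp_inj[OF ab])
    have l1: "pcompose [:-a, 1:] [:b, a - b:] = smult (a - b) [:-1, 1:]"
      by (simp add: pcompose_pCons algebra_simps)
    have l1': "[:b - a, a - b:] = smult (a - b) [:-1, 1:]" by simp
    have l2: "pcompose [:-b, 1:] [:b, a - b:] = monom (a - b) 1"
      by (simp add: pcompose_pCons monom_altdef)
    have l3: "pcompose [:0, 1:] [:b, a - b:] = [:b, a - b:]"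
      by (simp add: pcompose_pCons)
    have "pcompose ([:-a, 1:] * smult ((a - b) ^ n) (Fp a b (Suc n))) [:b, a - b:]
        = smult ((a - b) ^ n) (smult (a - b) [:-1, 1:] * Gp a b (n+1))"
      unfolding pcompose_mult pcompose_smult l1 comp_Fp[OF ab] mult_smult_right by simp
    also have "\<dots> = smult ((a - b) ^ Suc n) ([:-1, 1:] * Gp a b (n+1))"
      by (simp only: mult_smult_left smult_smult power_Suc mult.commute[of "(a - b) ^ n" "a - b"])
    also have "\<dots> = smult ((a - b) ^ Suc n) (monom (a * ?c) (n+1) - [:b, a - b:] * Gp a b n)"
      unfolding PI[OF n] cval ..
    also have "\<dots> = smult (a * ?c) (monom (a - b) 1 ^ Suc n) - smult ((a - b) ^ Suc n) ([:b, a - b:] * Gp a b n)"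
      by (simp add: cval monom_power smult_monom smult_diff_right mult_monom mult_ac del: mult_pCons_left)
    also have "\<dots> = pcompose (smult (a * ?c) ([:-b, 1:] ^ Suc n) - smult ((a - b) ^ Suc n) ([:0, 1:] * gpoly a b n)) [:b, a - b:]"
      by (simp only: pcompose_diff pcompose_smult pcompose_mult pcompose_power_left l2 l3 Suc.IH comp_Fp[OF ab])
    finally show "pcompose ([:-a, 1:] * smult ((a - b) ^ n) (Fp a b (Suc n))) [:b, a - b:] =
       pcompose (smult (a * ?c) ([:-b, 1:] ^ Suc n) - smult ((a - b) ^ Suc n) ([:0, 1:] * gpoly a b n)) [:b, a - b:]" .
  qed
  have "gpoly a b (Suc n) = Fp a b (Suc n)"
    unfolding gpoly.simps(2)
  proof (rule the_equality)
    fix p assume "[:-a, 1:] * smult ((a - b) ^ n) p =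
        smult (a * ?c) ([:-b, 1:] ^ Suc n) - smult ((a - b) ^ Suc n) ([:0, 1:] * gpoly a b n)"
    then have "[:-a, 1:] * smult ((a - b) ^ n) p = [:-a, 1:] * smult ((a - b) ^ n) (Fp a b (Suc n))" using E by simp
    moreover have "[:-a, 1:] \<noteq> (0 :: complex poly)" by simp
    ultimately have "smult ((a - b) ^ n) p = smult ((a - b) ^ n) (Fp a b (Suc n))"
      by (metis mult_left_cancel)
    then have "smult (inverse ((a - b) ^ n)) (smult ((a - b) ^ n) p) = smult (inverse ((a - b) ^ n)) (smult ((a - b) ^ n) (Fp a b (Suc n)))"
      by (rule arg_cong)
    moreover have inv1: "inverse ((a - b) ^ n) * (a - b) ^ n = 1" using dnz by simp
    ultimately show "p = Fp a b (Suc n)" by (simp only: smult_smult inv1 smult_1_left)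
  qed (rule E)
  then show ?case .
qed

theorem mainTheorem4:
  fixes \<alpha> \<beta> :: complex and n :: nat
  assumes "\<alpha> \<noteq> \<beta>" and "n \<ge> 1"
  shows "gpoly \<alpha> \<beta> n =
    (\<Sum>k<n. smult
       ((if k = 0 then \<beta> ^ n
         else of_nat (n - k) *
              (\<Sum>j = 1..k. (1 / of_nat j) * of_nat ((n - 1) choose (j - 1))
                  * of_nat ((k - 1) choose (j - 1)) * \<alpha> ^ j * \<beta> ^ (n - j)))
        / (\<alpha> - \<beta>) ^ k)
       ([:-\<beta>, 1:] ^ k))"
  using main[OF assms] unfolding Fp_def Acoef_def .

end
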